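(* Let $X$ be a real Hausdorff locally convex topological vector space, let $f:X\to\overline{\mathbb R}$ be proper, convex and lower semicontinuous, and let $U\subseteq\operatorname{dom} f$ be self-segment-dense in $\operatorname{dom} f$. Assume further that $\operatorname{co}(U)$ is segment-dense in $\operatorname{dom} f$. Then $\overline{f_U}=\overline{f_{\operatorname{co}(U)}}=f$ on $X$ and $\inf_{x\in U}f(x)=\inf_{x\in X}f(x)$.
   Context: $\overline{\mathbb R}=\mathbb R\cup\{\pm\infty\}$; $\operatorname{dom} f=\{x:f(x)<+\infty\}$; proper: $\operatorname{dom} f\ne\emptyset$ and $f>-\infty$. $\operatorname{co}$ is the convex hull. For $W\subseteq\operatorname{dom} f$: $\operatorname{epi} f_W=\{(w,r)\in W\times\mathbb R:f(w)\le r\}$ and $\overline{f_W}$ is the function on $X$ whose epigraph is $\operatorname{cl}(\operatorname{epi} f_W)$ in $X\times\mathbb R$. $[x,y]=\{x+t(y-x):t\in[0,1]\}$. Self-segment-dense: for convex $V$ and $U\subseteq V$, $U$ is self-segment-dense in $V$ if $V\subseteq\operatorname{cl}U$ and for all $x,y\in U$, $[x,y]\cap U$ is dense in $[x,y]$. Segment-dense: for convex $V$ and $U\subseteq V$, $U$ is segment-dense in $V$ if for each $x\in V$ there is $y\in U$ such that $x$ is a cluster point of $[x,y]\cap U$. *)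

theory Defs
  imports "HOL-Analysis.Analysis"
begin

text \<open>Real topological vector space with locally convex topology (Hausdorffness is
  provided by the type class t2_space in the statement).\<close>
definition locally_convex_tvs :: "('a::{real_vector,topological_space}) itself \<Rightarrow> bool" where
  "locally_convex_tvs _ \<longleftrightarrow>
     continuous_on UNIV (\<lambda>(x::'a, y::'a). x + y) \<and>
     continuous_on UNIV (\<lambda>(c::real, x::'a). c *\<^sub>R x) \<and>
     (\<forall>(x::'a) S. open S \<and> x \<in> S \<longrightarrow> (\<exists>V. open V \<and> convex V \<and> x \<in> V \<and> V \<subseteq> S))"

definition edom :: "('a \<Rightarrow> ereal) \<Rightarrow> 'a set" where
  "edom f = {x. f x < \<infinity>}"

definition proper_fun :: "('a \<Rightarrow> ereal) \<Rightarrow> bool" where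
  "proper_fun f \<longleftrightarrow> edom f \<noteq> {} \<and> (\<forall>x. f x > -\<infinity>)"

definition convex_efun :: "('a::real_vector \<Rightarrow> ereal) \<Rightarrow> bool" where
  "convex_efun f \<longleftrightarrow> convex {(x, r::real). f x \<le> ereal r}"

definition lsc_efun :: "('a::topological_space \<Rightarrow> ereal) \<Rightarrow> bool" where
  "lsc_efun f \<longleftrightarrow> (\<forall>r::real. closed {x. f x \<le> ereal r})"

definition epi_restr :: "('a \<Rightarrow> ereal) \<Rightarrow> 'a set \<Rightarrow> ('a \<times> real) set" where
  "epi_restr f W = {(w, r). w \<in> W \<and> f w \<le> ereal r}"

text \<open>The function whose epigraph is the closure of the epigraph of f restricted to W.\<close>
definition closure_restr :: "('a::topological_space \<Rightarrow> ereal) \<Rightarrow> 'a set \<Rightarrow> 'a \<Rightarrow> ereal" where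
  "closure_restr f W x = Inf (ereal ` {r. (x, r) \<in> closure (epi_restr f W)})"

definition self_segment_dense :: "('a::{real_vector,topological_space}) set \<Rightarrow> 'a set \<Rightarrow> bool" where
  "self_segment_dense U V \<longleftrightarrow> U \<subseteq> V \<and> V \<subseteq> closure U \<and>
     (\<forall>x\<in>U. \<forall>y\<in>U. closed_segment x y \<subseteq> closure (closed_segment x y \<inter> U))"

definition segment_dense :: "('a::{real_vector,topological_space}) set \<Rightarrow> 'a set \<Rightarrow> bool" where
  "segment_dense U V \<longleftrightarrow> U \<subseteq> V \<and>
     (\<forall>x\<in>V. \<exists>y\<in>U. x islimpt (closed_segment x y \<inter> U))"

end

theory Submission
  imports Defs
begin

lemma lc_add:
  fixes f g :: "'b::topological_space \<Rightarrow> 'a::{real_vector,topological_space}"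
  assumes "locally_convex_tvs TYPE('a)" "continuous_on S f" "continuous_on S g"
  shows "continuous_on S (\<lambda>x. f x + g x)"
proof -
  have c: "continuous_on UNIV (\<lambda>(x::'a, y::'a). x + y)" using assms(1) unfolding locally_convex_tvs_def by blast
  have "continuous_on S ((\<lambda>(x::'a, y::'a). x + y) \<circ> (\<lambda>x. (f x, g x)))"
    by (rule continuous_on_compose[OF continuous_on_Pair[OF assms(2,3)]]) (rule continuous_on_subset[OF c], simp)
  then show ?thesis by (simp add: o_def)
qed

lemma lc_scale:
  fixes f :: "'b::topological_space \<Rightarrow> real" and g :: "'b \<Rightarrow> 'a::{real_vector,topological_space}"
  assumes "locally_convex_tvs TYPE('a)" "continuous_on S f" "continuous_on S g"
  shows "continuous_on S (\<lambda>x. f x *\<^sub>R g x)"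
proof -
  have c: "continuous_on UNIV (\<lambda>(c::real, x::'a). c *\<^sub>R x)" using assms(1) unfolding locally_convex_tvs_def by blast
  have "continuous_on S ((\<lambda>(c::real, x::'a). c *\<^sub>R x) \<circ> (\<lambda>x. (f x, g x)))"
    by (rule continuous_on_compose[OF continuous_on_Pair[OF assms(2,3)]]) (rule continuous_on_subset[OF c], simp)
  then show ?thesis by (simp add: o_def)
qed

lemma lc_seg_cont:
  fixes a b :: "'a::{real_vector,topological_space}"
  assumes "locally_convex_tvs TYPE('a)"
  shows "continuous_on S (\<lambda>s::real. (1-s) *\<^sub>R a + s *\<^sub>R b)"
  by (intro lc_add lc_scale assms continuous_intros)

lemma lc_aff_cont:
  fixes u :: "'a::{real_vector,topological_space}"
  assumes "locally_convex_tvs TYPE('a)"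
  shows "continuous_on S (\<lambda>x. (1-t) *\<^sub>R x + t *\<^sub>R u)"
  by (intro lc_add lc_scale assms continuous_intros)

lemma seg_inj:
  fixes a b :: "'a::real_vector"
  assumes "a \<noteq> b" "(1-s) *\<^sub>R a + s *\<^sub>R b = (1-t) *\<^sub>R a + t *\<^sub>R b"
  shows "s = t"
proof -
  have "(s - t) *\<^sub>R (b - a) = 0" using assms(2) by (simp add: algebra_simps)
  then show ?thesis using assms(1) by simp
qed

lemma seg_far_closed:
  fixes a b :: "'a::{real_vector,t2_space}"
  assumes "locally_convex_tvs TYPE('a)" "compact T"
  shows "closed ((\<lambda>s::real. (1-s) *\<^sub>R a + s *\<^sub>R b) ` T)"
  by (intro compact_imp_closed compact_continuous_image lc_seg_cont assms)

lemma seg_pick: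
  fixes a b :: "'a::{real_vector,t2_space}"
  assumes LC: "locally_convex_tvs TYPE('a)"
    and p: "(1-t) *\<^sub>R a + t *\<^sub>R b \<in> closure (closed_segment a b \<inter> U)"
    and t: "0 \<le> t" "t \<le> 1" and d: "d > 0" and N: "open N" "(1-t) *\<^sub>R a + t *\<^sub>R b \<in> N"
  shows "\<exists>s. 0 \<le> s \<and> s \<le> 1 \<and> \<bar>s - t\<bar> < d \<and> (1-s) *\<^sub>R a + s *\<^sub>R b \<in> U \<inter> N"
proof (cases "a = b")
  case True
  then have "a \<in> closure ({a} \<inter> U)" using p by (simp add: scaleR_left_diff_distrib)
  then have "a \<in> U" by (cases "a \<in> U") auto
  then show ?thesis using True t d N by (intro exI[of _ t]) (auto simp: scaleR_left_diff_distrib)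
next
  case False
  define \<phi> where "\<phi> = (\<lambda>s::real. (1-s) *\<^sub>R a + s *\<^sub>R b)"
  define K where "K = \<phi> ` ({0..1} - {t-d<..<t+d})"
  have "closed K" unfolding K_def \<phi>_def
    by (intro seg_far_closed LC compact_diff) auto
  have "\<phi> t \<notin> K"
  proof
    assume "\<phi> t \<in> K"
    then obtain s where s: "s \<in> {0..1} - {t-d<..<t+d}" "\<phi> t = \<phi> s" unfolding K_def by blast
    then have "(1-s) *\<^sub>R a + s *\<^sub>R b = (1-t) *\<^sub>R a + t *\<^sub>R b" unfolding \<phi>_def by simp
    then have "s = t" by (rule seg_inj[OF False])
    then show False using s d by auto
  qed
  have "open (N \<inter> -K)" using \<open>closed K\<close> N by auto
  moreover have "\<phi> t \<in> N \<inter> -K" using \<open>\<phi> t \<notin> K\<close> N unfolding \<phi>_def by auto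
  ultimately have "(N \<inter> -K) \<inter> (closed_segment a b \<inter> U) \<noteq> {}"
    using p open_Int_closure_eq_empty[of "N \<inter> -K" "closed_segment a b \<inter> U"] unfolding \<phi>_def by blast
  then obtain q where q: "q \<in> N" "q \<notin> K" "q \<in> closed_segment a b" "q \<in> U" by blast
  then obtain s where s: "0 \<le> s" "s \<le> 1" "q = \<phi> s" unfolding closed_segment_def \<phi>_def by auto
  have "s \<in> {t-d<..<t+d}" using q(2) s unfolding K_def by auto
  then show ?thesis using s q unfolding \<phi>_def by (intro exI[of _ s]) auto
qed

lemma epi_closed:
  fixes f :: "'a::topological_space \<Rightarrow> ereal"
  assumes "lsc_efun f"
  shows "closed {(x, r::real). f x \<le> ereal r}"
proof -
  have "- {(x, r::real). f x \<le> ereal r} = (\<Union>s::real. (- {x. f x \<le> ereal s}) \<times> {..<s})"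
  proof (intro set_eqI iffI)
    fix z assume "z \<in> - {(x, r::real). f x \<le> ereal r}"
    then obtain x r where z: "z = (x, r)" "\<not> f x \<le> ereal r" by (cases z) auto
    have "ereal r < f x" using z by auto
    then obtain s where "ereal r < ereal s" "ereal s < f x" using ereal_dense2[OF \<open>ereal r < f x\<close>] by blast
    then show "z \<in> (\<Union>s::real. (- {x. f x \<le> ereal s}) \<times> {..<s})" using z by (auto intro!: exI[of _ s])
  next
    fix z assume "z \<in> (\<Union>s::real. (- {x. f x \<le> ereal s}) \<times> {..<s})"
    then obtain s x r where h: "z = (x, r)" "\<not> f x \<le> ereal s" "r < s" by auto
    have "\<not> f x \<le> ereal r"
    proof
      assume "f x \<le> ereal r"
      moreover have "ereal r \<le> ereal s" using h(3) by simp
      ultimately have "f x \<le> ereal s" by (rule order_trans)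
      then show False using h(2) by simp
    qed
    then show "z \<in> - {(x, r::real). f x \<le> ereal r}" using h(1) by simp
  qed
  moreover have "open (\<Union>s::real. (- {x. f x \<le> ereal s}) \<times> {..<s})"
    using assms unfolding lsc_efun_def by (intro open_UN ballI open_Times) auto
  ultimately show ?thesis unfolding closed_def by simp
qed

lemma conv2:
  assumes "convex_efun f" "f x \<le> ereal a" "f y \<le> ereal b" "0 \<le> s" "s \<le> 1"
  shows "f ((1-s) *\<^sub>R x + s *\<^sub>R y) \<le> ereal ((1-s) * a + s * b)"
proof -
  have cv: "convex {(x, r::real). f x \<le> ereal r}" using assms(1) unfolding convex_efun_def .
  have "(1-s) *\<^sub>R (x, a) + s *\<^sub>R (y, b) \<in> {(x, r::real). f x \<le> ereal r}"
    by (rule convexD[OF cv]) (use assms in auto)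
  then show ?thesis by simp
qed

lemma jensen:
  assumes "convex_efun f" "finite S" "\<forall>v\<in>S. 0 \<le> w v" "sum w S = 1" "\<forall>v\<in>S. f v \<le> ereal (r v)"
  shows "f (\<Sum>v\<in>S. w v *\<^sub>R v) \<le> ereal (\<Sum>v\<in>S. w v * r v)"
proof -
  have "(\<Sum>v\<in>S. w v *\<^sub>R (v, r v)) \<in> {(x, r::real). f x \<le> ereal r}"
    using assms unfolding convex_efun_def by (intro convex_sum) auto
  moreover have "(\<Sum>v\<in>S. w v *\<^sub>R (v, r v)) = ((\<Sum>v\<in>S. w v *\<^sub>R v), (\<Sum>v\<in>S. w v * r v))"
    by (simp add: prod_eq_iff fst_sum snd_sum)
  ultimately show ?thesis by simp
qed


lemma dens:
  fixes U :: "'a::{real_vector,t2_space} set"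
  assumes LC: "locally_convex_tvs TYPE('a)"
    and ssd: "\<forall>x\<in>U. \<forall>y\<in>U. closed_segment x y \<subseteq> closure (closed_segment x y \<inter> U)"
  shows "finite S \<Longrightarrow> S \<subseteq> U \<Longrightarrow> (\<forall>v\<in>S. 0 \<le> l v) \<Longrightarrow> sum l S = 1 \<Longrightarrow> d > 0 \<Longrightarrow> open N
    \<Longrightarrow> (\<Sum>v\<in>S. l v *\<^sub>R v) \<in> N
    \<Longrightarrow> \<exists>m. (\<forall>v\<in>S. 0 \<le> m v) \<and> sum m S = 1 \<and> (\<forall>v\<in>S. \<bar>m v - l v\<bar> < d) \<and> (\<Sum>v\<in>S. m v *\<^sub>R v) \<in> U \<inter> N"
proof (induction S arbitrary: l d N rule: finite_induct)
  case empty
  then show ?case by simp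
next
  case (insert u S)
  define t where "t = l u"
  have uU: "u \<in> U" and SU: "S \<subseteq> U" using insert by auto
  have sumins: "t + sum l S = 1" using insert unfolding t_def by simp
  have t0: "0 \<le> t" using insert unfolding t_def by simp
  have sS0: "0 \<le> sum l S" using insert by (intro sum_nonneg) auto
  have vecins: "(\<Sum>v\<in>insert u S. l v *\<^sub>R v) = t *\<^sub>R u + (\<Sum>v\<in>S. l v *\<^sub>R v)"
    using insert unfolding t_def by simp
  show ?case
  proof (cases "t = 1")
    case True
    then have "sum l S = 0" using sumins by simp
    then have "\<forall>v\<in>S. l v = 0" using insert sum_nonneg_eq_0_iff[of S l] by auto
    then have "(\<Sum>v\<in>S. l v *\<^sub>R v) = 0" by simp
    then have "(\<Sum>v\<in>insert u S. l v *\<^sub>R v) = u" using vecins True by simp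
    then show ?thesis using insert uU by (intro exI[of _ l]) auto
  next
    case False
    then have t1: "t < 1" using sumins sS0 by simp
    define l' where "l' v = l v / (1 - t)" for v
    have l'0: "\<forall>v\<in>S. 0 \<le> l' v" using insert t1 unfolding l'_def by auto
    have l'1: "sum l' S = 1" using sumins t1 unfolding l'_def by (simp add: sum_divide_distrib[symmetric])
    define N' where "N' = {a. (1-t) *\<^sub>R a + t *\<^sub>R u \<in> N}"
    have "open N'"
    proof -
      have "open ((\<lambda>x. (1-t) *\<^sub>R x + t *\<^sub>R u) -` N \<inter> UNIV)"
        using continuous_on_open_vimage[of UNIV "\<lambda>x. (1-t) *\<^sub>R x + t *\<^sub>R u"] lc_aff_cont[OF LC] insert.prems
        by blast
      then show ?thesis unfolding N'_def by (simp add: vimage_def)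
    qed
    have "(1-t) *\<^sub>R (\<Sum>v\<in>S. l' v *\<^sub>R v) = (\<Sum>v\<in>S. l v *\<^sub>R v)"
      using t1 unfolding l'_def by (simp add: scaleR_sum_right)
    then have "(\<Sum>v\<in>S. l' v *\<^sub>R v) \<in> N'" using insert.prems vecins unfolding N'_def by (simp add: add.commute)
    from insert.IH[OF SU l'0 l'1 _ \<open>open N'\<close> this, of "d/2"] insert.prems
    obtain m' where m': "\<forall>v\<in>S. 0 \<le> m' v" "sum m' S = 1" "\<forall>v\<in>S. \<bar>m' v - l' v\<bar> < d/2"
      "(\<Sum>v\<in>S. m' v *\<^sub>R v) \<in> U \<inter> N'" by auto
    define a where "a = (\<Sum>v\<in>S. m' v *\<^sub>R v)"
    have aU: "a \<in> U" and aN: "(1-t) *\<^sub>R a + t *\<^sub>R u \<in> N" using m'(4) unfolding a_def N'_def by auto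
    have "(1-t) *\<^sub>R a + t *\<^sub>R u \<in> closed_segment a u" using t0 t1 unfolding closed_segment_def by auto
    then have "(1-t) *\<^sub>R a + t *\<^sub>R u \<in> closure (closed_segment a u \<inter> U)" using ssd aU uU by blast
    from seg_pick[OF LC this t0 _ _ _ aN, of "d/2"] t1 insert.prems
    obtain s where s: "0 \<le> s" "s \<le> 1" "\<bar>s - t\<bar> < d/2" "(1-s) *\<^sub>R a + s *\<^sub>R u \<in> U \<inter> N" by auto
    define m where "m v = (if v = u then s else (1-s) * m' v)" for v
    have mS: "\<And>v. v \<in> S \<Longrightarrow> m v = (1-s) * m' v" using insert unfolding m_def by auto
    have "sum m (insert u S) = s + sum (\<lambda>v. (1-s) * m' v) S"
      using insert mS by (simp add: m_def)
    also have "\<dots> = 1" using m'(2) by (simp add: sum_distrib_left[symmetric])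
    finally have m1: "sum m (insert u S) = 1" .
    have "(\<Sum>v\<in>insert u S. m v *\<^sub>R v) = s *\<^sub>R u + (\<Sum>v\<in>S. ((1-s) * m' v) *\<^sub>R v)"
      using insert mS by (simp add: m_def)
    also have "\<dots> = (1-s) *\<^sub>R a + s *\<^sub>R u" unfolding a_def by (simp add: scaleR_sum_right)
    finally have mv: "(\<Sum>v\<in>insert u S. m v *\<^sub>R v) \<in> U \<inter> N" using s(4) by simp
    have m0: "\<forall>v\<in>insert u S. 0 \<le> m v" using m'(1) s unfolding m_def by auto
    have mclose: "\<bar>m v - l v\<bar> < d" if v: "v \<in> insert u S" for v
    proof (cases "v = u")
      case True
      then show ?thesis using s(3) insert.prems unfolding m_def t_def by simp
    next
      case False
      then have vS: "v \<in> S" using v by simp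
      have l'le: "l' v \<le> 1" using l'1 l'0 vS member_le_sum[of v S l'] insert(1) by simp
      have lv: "l v = (1-t) * l' v" using t1 unfolding l'_def by simp
      have e1: "\<bar>m' v - l' v\<bar> < d/2" using m'(3) vS by blast
      have "m v - l v = (1-s) * (m' v - l' v) + (t - s) * l' v" using mS[OF vS] lv by (simp add: algebra_simps)
      moreover have "\<bar>(1-s) * (m' v - l' v)\<bar> \<le> \<bar>m' v - l' v\<bar>"
        using s(1,2) by (simp add: abs_mult mult_left_le_one_le)
      moreover have "\<bar>(t - s) * l' v\<bar> \<le> \<bar>t - s\<bar>"
        using l'le l'0 vS by (simp add: abs_mult mult_left_le)
      ultimately have "\<bar>m v - l v\<bar> \<le> \<bar>m' v - l' v\<bar> + \<bar>t - s\<bar>"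
        using abs_triangle_ineq[of "(1-s) * (m' v - l' v)" "(t - s) * l' v"] by linarith
      then show ?thesis using e1 s(3) abs_minus_commute[of s t] by linarith
    qed
    show ?thesis using m0 m1 mclose mv by blast
  qed
qed


definition goodpt :: "('a::topological_space \<Rightarrow> ereal) \<Rightarrow> 'a set \<Rightarrow> 'a \<Rightarrow> bool" where
  "goodpt f U x \<longleftrightarrow> (\<forall>N. open N \<longrightarrow> x \<in> N \<longrightarrow> (\<forall>e>0. \<exists>w\<in>U \<inter> N. f w < f x + ereal e))"

lemma finite_val:
  assumes "proper_fun f" "x \<in> edom f"
  shows "f x = ereal (real_of_ereal (f x))"
  using assms unfolding proper_fun_def edom_def by (cases "f x") auto

lemma good_hull:
  fixes U :: "'a::{real_vector,t2_space} set" and f :: "'a \<Rightarrow> ereal"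
  assumes LC: "locally_convex_tvs TYPE('a)" and cf: "convex_efun f" and pf: "proper_fun f"
    and UD: "U \<subseteq> edom f"
    and ssd: "\<forall>x\<in>U. \<forall>y\<in>U. closed_segment x y \<subseteq> closure (closed_segment x y \<inter> U)"
    and z: "z \<in> convex hull U" and zD: "z \<in> edom f"
  shows "goodpt f U z"
  unfolding goodpt_def
proof (intro allI impI)
  fix N :: "'a set" and e :: real
  assume N: "open N" "z \<in> N" and e: "e > 0"
  obtain S l where S: "finite S" "S \<subseteq> U" "\<forall>v\<in>S. 0 \<le> l v" "sum l S = 1" "(\<Sum>v\<in>S. l v *\<^sub>R v) = z"
    using z unfolding convex_hull_explicit by blast
  define r where "r v = real_of_ereal (f v)" for v
  have fv: "\<forall>v\<in>S. f v = ereal (r v)" using S(2) UD finite_val[OF pf] unfolding r_def by blast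
  define c where "c = real_of_ereal (f z)"
  have fz: "f z = ereal c" using finite_val[OF pf zD] unfolding c_def .
  define M where "M = (\<Sum>v\<in>S. \<bar>r v\<bar>)"
  have M0: "M \<ge> 0" unfolding M_def by (intro sum_nonneg) auto
  define K where "K = \<bar>c\<bar> + M + 1"
  have K0: "K > 0" unfolding K_def using M0 by simp
  define \<theta> where "\<theta> = min (1/2) (e / (2 * K))"
  have th0: "\<theta> > 0" unfolding \<theta>_def using e K0 by simp
  have th1: "\<theta> \<le> 1/2" unfolding \<theta>_def by simp
  have thK: "\<theta> * K \<le> e / 2"
  proof -
    have "\<theta> \<le> e / (2 * K)" unfolding \<theta>_def by simp
    then have "\<theta> * K \<le> e / (2 * K) * K" using K0 by (intro mult_right_mono) auto
    also have "\<dots> = e / 2" using K0 by simp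
    finally show ?thesis .
  qed
  define P where "P = l ` S \<inter> {0<..}"
  have "P \<noteq> {}"
  proof
    assume "P = {}"
    have "\<forall>v\<in>S. l v \<le> 0"
    proof
      fix v assume v: "v \<in> S"
      show "l v \<le> 0"
      proof (rule ccontr)
        assume "\<not> l v \<le> 0"
        then have "l v \<in> P" using v unfolding P_def by auto
        then show False using \<open>P = {}\<close> by simp
      qed
    qed
    then have "sum l S \<le> 0" by (intro sum_nonpos) auto
    then show False using S(4) by simp
  qed
  have finP: "finite P" unfolding P_def using S(1) by simp
  define mm where "mm = Min P"
  have mm0: "mm > 0" unfolding mm_def using Min_in[OF finP \<open>P \<noteq> {}\<close>] unfolding P_def by auto
  have mmle: "mm \<le> l v" if "v \<in> S" "l v > 0" for v
    unfolding mm_def using that finP by (intro Min_le) (auto simp: P_def)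
  have "z \<in> N" using N by simp
  then obtain m where m: "\<forall>v\<in>S. 0 \<le> m v" "sum m S = 1" "\<forall>v\<in>S. \<bar>m v - l v\<bar> < \<theta> * mm"
      "(\<Sum>v\<in>S. m v *\<^sub>R v) \<in> U \<inter> N"
    using dens[OF LC ssd S(1,2,3,4), of "\<theta> * mm" N] th0 mm0 N S(5) by auto
  define w where "w v = (m v - (1 - \<theta>) * l v) / \<theta>" for v
  have w0: "\<forall>v\<in>S. 0 \<le> w v"
  proof
    fix v assume v: "v \<in> S"
    have "(1 - \<theta>) * l v \<le> m v"
    proof (cases "l v > 0")
      case True
      have "\<theta> * mm \<le> \<theta> * l v" using mmle[OF v True] th0 by (intro mult_left_mono) auto
      moreover have "\<bar>m v - l v\<bar> < \<theta> * mm" using m(3) v by blast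
      ultimately have "l v - m v < \<theta> * l v" by linarith
      then show ?thesis by (simp add: algebra_simps)
    next
      case False
      moreover have "0 \<le> l v" using S(3) v by blast
      ultimately have "l v = 0" by linarith
      then show ?thesis using m(1) v by simp
    qed
    then show "0 \<le> w v" unfolding w_def using th0 by simp
  qed
  have w1: "sum w S = 1"
  proof -
    have "sum w S = (sum m S - (1 - \<theta>) * sum l S) / \<theta>"
      unfolding w_def by (simp add: sum_divide_distrib[symmetric] sum_subtractf sum_distrib_left)
    then show ?thesis using m(2) S(4) th0 by simp
  qed
  have wle: "w v \<le> 1" if "v \<in> S" for v
    using member_le_sum[of v S w] w0 w1 S(1) that by simp
  define y where "y = (\<Sum>v\<in>S. w v *\<^sub>R v)"
  define B where "B = (\<Sum>v\<in>S. w v * r v)"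
  have fy: "f y \<le> ereal B" unfolding y_def B_def
    using jensen[OF cf S(1) w0 w1, of r] fv by simp
  have BM: "B \<le> M" unfolding B_def M_def
  proof (rule sum_mono)
    fix v assume v: "v \<in> S"
    have "w v * r v \<le> w v * \<bar>r v\<bar>" using w0 v by (intro mult_left_mono) auto
    also have "\<dots> \<le> \<bar>r v\<bar>" using mult_right_mono[OF wle[OF v] abs_ge_zero[of "r v"]] by simp
    finally show "w v * r v \<le> \<bar>r v\<bar>" .
  qed
  have mw: "m v = (1 - \<theta>) * l v + \<theta> * w v" for v unfolding w_def using th0 by simp
  have q: "(\<Sum>v\<in>S. m v *\<^sub>R v) = (1 - \<theta>) *\<^sub>R z + \<theta> *\<^sub>R y"
    unfolding mw y_def S(5)[symmetric] by (simp add: scaleR_add_left sum.distrib scaleR_sum_right)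
  have hle: "f ((1 - \<theta>) *\<^sub>R z + \<theta> *\<^sub>R y) \<le> ereal ((1 - \<theta>) * c + \<theta> * B)"
    using conv2[OF cf _ fy, of z c \<theta>] fz th0 th1 by simp
  moreover have hlt: "(1 - \<theta>) * c + \<theta> * B < c + e"
  proof -
    have "\<theta> * B \<le> \<theta> * M" using BM th0 by simp
    moreover have "- (\<theta> * c) \<le> \<theta> * \<bar>c\<bar>"
    proof -
      have "\<theta> * (- c) \<le> \<theta> * \<bar>c\<bar>" using th0 by (intro mult_left_mono) auto
      then show ?thesis by simp
    qed
    ultimately have "(1 - \<theta>) * c + \<theta> * B \<le> c + \<theta> * K - \<theta>" unfolding K_def by (simp add: algebra_simps)
    then show ?thesis using thK th0 e by simp
  qed
  have "ereal ((1 - \<theta>) * c + \<theta> * B) < ereal (c + e)" using hlt by simp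
  with hle have "f ((1 - \<theta>) *\<^sub>R z + \<theta> *\<^sub>R y) < ereal (c + e)" by (rule order.strict_trans1)
  then have "f (\<Sum>v\<in>S. m v *\<^sub>R v) < f z + ereal e" unfolding q fz by simp
  then show "\<exists>w\<in>U \<inter> N. f w < f z + ereal e" using m(4) by blast
qed


lemma good_dom:
  fixes U :: "'a::{real_vector,t2_space} set" and f :: "'a \<Rightarrow> ereal"
  assumes LC: "locally_convex_tvs TYPE('a)" and cf: "convex_efun f" and pf: "proper_fun f"
    and sd: "segment_dense (convex hull U) (edom f)"
    and gh: "\<And>z. z \<in> convex hull U \<Longrightarrow> goodpt f U z"
    and x: "x \<in> edom f"
  shows "goodpt f U x"
  unfolding goodpt_def
proof (intro allI impI)
  fix N :: "'a set" and e :: real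
  assume N: "open N" "x \<in> N" and e: "e > 0"
  obtain y where y: "y \<in> convex hull U" "x islimpt (closed_segment x y \<inter> convex hull U)"
    using sd x unfolding segment_dense_def by blast
  have yD: "y \<in> edom f" using sd y(1) unfolding segment_dense_def by blast
  have "x \<noteq> y"
  proof
    assume "x = y"
    have "\<exists>y'\<in>closed_segment x y \<inter> convex hull U. y' \<in> UNIV \<and> y' \<noteq> x"
      using y(2) unfolding islimpt_def by blast
    then show False using \<open>x = y\<close> by simp
  qed
  define a where "a = real_of_ereal (f x)"
  have fx: "f x = ereal a" using finite_val[OF pf x] unfolding a_def .
  define b where "b = real_of_ereal (f y)"
  have fy: "f y = ereal b" using finite_val[OF pf yD] unfolding b_def .
  define K where "K = \<bar>a\<bar> + \<bar>b\<bar> + 1"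
  have K0: "K > 0" unfolding K_def by simp
  define \<delta> where "\<delta> = min 1 (e / (2 * K))"
  have d0: "\<delta> > 0" unfolding \<delta>_def using e K0 by simp
  have dK: "\<delta> * K \<le> e / 2"
  proof -
    have "\<delta> \<le> e / (2 * K)" unfolding \<delta>_def by simp
    then have "\<delta> * K \<le> e / (2 * K) * K" using K0 by (intro mult_right_mono) auto
    also have "\<dots> = e / 2" using K0 by simp
    finally show ?thesis .
  qed
  define \<phi> where "\<phi> = (\<lambda>s::real. (1-s) *\<^sub>R x + s *\<^sub>R y)"
  define C where "C = \<phi> ` {\<delta>..1}"
  have "closed C" unfolding C_def \<phi>_def by (intro seg_far_closed LC) auto
  have "x \<notin> C"
  proof
    assume "x \<in> C"
    then obtain s where s: "s \<in> {\<delta>..1}" "x = \<phi> s" unfolding C_def by blast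
    have "\<phi> s = \<phi> 0" using s unfolding \<phi>_def by simp
    then have "(1-s) *\<^sub>R x + s *\<^sub>R y = (1-0) *\<^sub>R x + 0 *\<^sub>R y" unfolding \<phi>_def by simp
    then have "s = 0" by (rule seg_inj[OF \<open>x \<noteq> y\<close>])
    then show False using s d0 by simp
  qed
  have oNC: "open (N \<inter> -C)" using \<open>closed C\<close> N by auto
  have xNC: "x \<in> N \<inter> -C" using N \<open>x \<notin> C\<close> by auto
  obtain z where z0: "z \<in> closed_segment x y \<inter> convex hull U" "z \<in> N \<inter> -C" "z \<noteq> x"
    by (rule islimptE[OF y(2) xNC oNC])
  then have z: "z \<in> closed_segment x y" "z \<in> convex hull U" "z \<in> N" "z \<notin> C" by auto
  then obtain s where s: "0 \<le> s" "s \<le> 1" "z = \<phi> s" unfolding closed_segment_def \<phi>_def by auto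
  have sd': "s < \<delta>" using z(4) s unfolding C_def by auto
  have fz: "f z \<le> ereal ((1-s) * a + s * b)" using conv2[OF cf _ _ s(1,2), of x a y b] fx fy s(3)
    unfolding \<phi>_def by simp
  have A: "(1-s) * a + s * b < a + e/2"
  proof -
    have "s * (b - a) \<le> s * (\<bar>a\<bar> + \<bar>b\<bar>)" using s(1) by (intro mult_left_mono) auto
    then have "(1-s) * a + s * b \<le> a + s * (\<bar>a\<bar> + \<bar>b\<bar>)" by (simp add: algebra_simps)
    moreover have "s * (\<bar>a\<bar> + \<bar>b\<bar>) < \<delta> * K"
    proof -
      have "s * (\<bar>a\<bar> + \<bar>b\<bar>) \<le> s * K" unfolding K_def using s(1) by (intro mult_left_mono) auto
      also have "\<dots> < \<delta> * K" using sd' K0 by simp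
      finally show ?thesis .
    qed
    ultimately show ?thesis using dK by simp
  qed
  have "\<forall>e>0. \<exists>w\<in>U \<inter> N. f w < f z + ereal e" using gh[OF z(2)] z(3) N(1) unfolding goodpt_def by blast
  moreover have "e/2 > 0" using e by simp
  ultimately obtain w where w: "w \<in> U \<inter> N" "f w < f z + ereal (e/2)" by blast
  have "f z + ereal (e/2) \<le> ereal ((1-s) * a + s * b) + ereal (e/2)" using fz by (rule add_right_mono)
  also have "\<dots> = ereal ((1-s) * a + s * b + e/2)" by simp
  also have "\<dots> < f x + ereal e" using A fx by simp
  finally have "f z + ereal (e/2) < f x + ereal e" .
  with w(2) have "f w < f x + ereal e" by (rule less_trans)
  then show "\<exists>w\<in>U \<inter> N. f w < f x + ereal e" using w(1) by blast
qed

lemma good_closure: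
  assumes "goodpt f U x" "f x = ereal a" "a < s" "U \<subseteq> W"
  shows "(x, s) \<in> closure (epi_restr f W)"
proof (rule ccontr)
  assume nc: "(x, s) \<notin> closure (epi_restr f W)"
  have "open (- closure (epi_restr f W))" by auto
  moreover have "(x, s) \<in> - closure (epi_restr f W)" using nc by simp
  ultimately obtain A B where AB: "open A" "open B" "(x, s) \<in> A \<times> B" "A \<times> B \<subseteq> - closure (epi_restr f W)"
    by (rule open_prod_elim)
  have "x \<in> A" using AB(3) by simp
  then have "\<forall>e>0. \<exists>w\<in>U \<inter> A. f w < f x + ereal e" using assms(1) AB(1) unfolding goodpt_def by blast
  moreover have "s - a > 0" using assms(3) by simp
  ultimately obtain w where w: "w \<in> U \<inter> A" "f w < f x + ereal (s - a)" by blast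
  have "f w \<le> ereal s" using w(2) assms(2) by simp
  then have "(w, s) \<in> epi_restr f W" using w(1) assms(4) unfolding epi_restr_def by auto
  moreover have "(w, s) \<in> A \<times> B" using w(1) AB(3) by auto
  ultimately show False using AB(4) closure_subset by blast
qed

lemma cr_eq:
  fixes f :: "'a::{real_vector,t2_space} \<Rightarrow> ereal"
  assumes lsc: "lsc_efun f" and pf: "proper_fun f" and UW: "U \<subseteq> W"
    and g: "\<And>x. x \<in> edom f \<Longrightarrow> goodpt f U x"
  shows "closure_restr f W x = f x"
proof (rule antisym)
  have sub: "closure (epi_restr f W) \<subseteq> {(x, r::real). f x \<le> ereal r}"
    by (rule closure_minimal) (auto simp: epi_restr_def epi_closed[OF lsc])
  show "f x \<le> closure_restr f W x" unfolding closure_restr_def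
    using sub by (intro Inf_greatest) auto
  show "closure_restr f W x \<le> f x"
  proof (cases "x \<in> edom f")
    case False
    then have "f x = \<infinity>" unfolding edom_def by simp
    then show ?thesis by simp
  next
    case True
    define a where "a = real_of_ereal (f x)"
    have fx: "f x = ereal a" using finite_val[OF pf True] unfolding a_def .
    have "closure_restr f W x \<le> ereal a + ereal e" if "e > 0" for e
    proof -
      have "(x, a + e) \<in> closure (epi_restr f W)" using good_closure[OF g[OF True] fx _ UW] that by simp
      then show ?thesis unfolding closure_restr_def by (intro Inf_lower) auto
    qed
    then show ?thesis unfolding fx by (rule ereal_le_epsilon2)
  qed
qed

theorem mainTheorem9:
  fixes f :: "'a::{real_vector,t2_space} \<Rightarrow> ereal" and U :: "'a set"
  assumes "locally_convex_tvs TYPE('a)"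
    and "proper_fun f" and "convex_efun f" and "lsc_efun f"
    and "U \<subseteq> edom f"
    and "self_segment_dense U (edom f)"
    and "segment_dense (convex hull U) (edom f)"
  shows "closure_restr f U = f \<and> closure_restr f (convex hull U) = f \<and>
         (INF x\<in>U. f x) = (INF x. f x)"
proof -
  have ssd: "\<forall>x\<in>U. \<forall>y\<in>U. closed_segment x y \<subseteq> closure (closed_segment x y \<inter> U)"
    using assms(6) unfolding self_segment_dense_def by blast
  have hD: "convex hull U \<subseteq> edom f" using assms(7) unfolding segment_dense_def by blast
  have gh: "goodpt f U z" if "z \<in> convex hull U" for z
    using good_hull[OF assms(1,3,2,5) ssd that] hD that by blast
  have g: "goodpt f U x" if "x \<in> edom f" for x
    using good_dom[OF assms(1,3,2,7) gh that] .
  have c1: "closure_restr f U = f"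
    using cr_eq[OF assms(4,2) order_refl g] by blast
  have c2: "closure_restr f (convex hull U) = f"
    using cr_eq[OF assms(4,2) hull_subset g] by blast
  have c3: "(INF x\<in>U. f x) = (INF x. f x)"
  proof (rule antisym)
    show "(INF x. f x) \<le> (INF x\<in>U. f x)" by (rule INF_superset_mono) auto
    show "(INF x\<in>U. f x) \<le> (INF x. f x)"
    proof (rule INF_greatest)
      fix x
      show "(INF x\<in>U. f x) \<le> f x"
      proof (cases "x \<in> edom f")
        case False
        then show ?thesis unfolding edom_def by simp
      next
        case True
        define a where "a = real_of_ereal (f x)"
        have fx: "f x = ereal a" using finite_val[OF assms(2) True] unfolding a_def .
        have "(INF x\<in>U. f x) \<le> ereal a + ereal e" if "e > 0" for e
        proof -
          have "\<exists>w\<in>U \<inter> UNIV. f w < f x + ereal e"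
            using g[OF True] that unfolding goodpt_def by blast
          then obtain w where w: "w \<in> U" "f w < f x + ereal e" by blast
          have "(INF x\<in>U. f x) \<le> f w" using w(1) by (rule INF_lower)
          also have "f w \<le> ereal a + ereal e" using w(2) fx by simp
          finally show ?thesis .
        qed
        then show ?thesis unfolding fx by (rule ereal_le_epsilon2)
      qed
    qed
  qed
  show ?thesis using c1 c2 c3 by blast
qed

end
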